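(* Let $(\varphi_\alpha)_{\alpha>0}$ be a family of functions $\varphi_\alpha\colon\mathbb{R}\to\mathbb{R}$, each monotonically increasing (non-decreasing) and nonexpansive (i.e. $1$-Lipschitz) with $\varphi_\alpha(0)=0$. Then the following are equivalent: (1) for all $x\in\mathbb{R}$, $\lim_{\alpha\to 0}\varphi_\alpha(x)=x$; (2) for all $x\in\mathbb{R}$, $\lim_{\alpha\to0}\varphi_\alpha^{-1}(x)=\{x\}$.
   Context: For $x\in\mathbb{R}$, $\varphi_\alpha^{-1}(x)=\{y\in\mathbb{R}:\varphi_\alpha(y)=x\}$ denotes the (possibly empty) preimage. The statement $\lim_{\alpha\to0}\varphi_\alpha^{-1}(x)=\{x\}$ means by definition $\lim_{\alpha\to 0}\sup_{y\in\varphi_\alpha^{-1}(x)}|y-x|=0$, with the convention $\sup_{y\in\emptyset}|y-x|:=\infty$. *)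

theory Defs
  imports "HOL-Analysis.Analysis"
begin

definition preimage_dev :: "(real \<Rightarrow> real) \<Rightarrow> real \<Rightarrow> ereal" where
  "preimage_dev f x =
     (if f -` {x} = {} then \<infinity> else (SUP y\<in>f -` {x}. ereal \<bar>y - x\<bar>))"

end

theory Submission
  imports Defs
begin

lemma pd_nonneg: "preimage_dev f x \<ge> 0"
proof (cases "f -` {x} = {}")
  case True then show ?thesis by (simp add: preimage_dev_def)
next
  case False
  then obtain y where y: "y \<in> f -` {x}" by blast
  have "ereal 0 \<le> ereal \<bar>y - x\<bar>" by simp
  also have "\<dots> \<le> (SUP y\<in>f -` {x}. ereal \<bar>y - x\<bar>)" using y by (rule SUP_upper)
  finally show ?thesis using False by (simp add: preimage_dev_def zero_ereal_def)
qed

lemma pd_small: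
  assumes "preimage_dev f x < ereal e"
  shows "\<exists>y. f y = x \<and> \<bar>y - x\<bar> < e"
proof -
  have ne: "f -` {x} \<noteq> {}" using assms by (auto simp: preimage_dev_def)
  then obtain y where y: "y \<in> f -` {x}" by blast
  have "ereal \<bar>y - x\<bar> \<le> (SUP y\<in>f -` {x}. ereal \<bar>y - x\<bar>)" using y by (rule SUP_upper)
  also have "\<dots> < ereal e" using assms ne by (simp add: preimage_dev_def)
  finally show ?thesis using y by auto
qed

lemma pd_bound:
  fixes f :: "real \<Rightarrow> real"
  assumes m: "mono f" and c: "continuous_on UNIV f" and e: "e > 0"
    and lo: "f (x - e) < x" and hi: "x < f (x + e)"
  shows "preimage_dev f x \<le> ereal e"
proof -
  have "continuous_on {x-e..x+e} f" using c continuous_on_subset by blast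
  then obtain y where "f y = x" using IVT'[of f "x-e" x "x+e"] lo hi e by force
  hence ne: "f -` {x} \<noteq> {}" by auto
  have "(SUP y\<in>f -` {x}. ereal \<bar>y - x\<bar>) \<le> ereal e"
  proof (rule SUP_least)
    fix y assume y: "y \<in> f -` {x}"
    have "y < x + e"
    proof (rule ccontr)
      assume "\<not> y < x + e"
      hence "f (x+e) \<le> f y" using m by (simp add: mono_def)
      thus False using y hi by auto
    qed
    moreover have "y > x - e"
    proof (rule ccontr)
      assume "\<not> y > x - e"
      hence "f y \<le> f (x-e)" using m by (simp add: mono_def)
      thus False using y lo by auto
    qed
    ultimately show "ereal \<bar>y - x\<bar> \<le> ereal e" by auto
  qed
  thus ?thesis using ne by (simp add: preimage_dev_def)
qed

theorem lemma2p2: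
  fixes \<phi> :: "real \<Rightarrow> real \<Rightarrow> real"
  assumes mono: "\<And>\<alpha>. \<alpha> > 0 \<Longrightarrow> mono (\<phi> \<alpha>)"
    and nonexp: "\<And>\<alpha> x y. \<alpha> > 0 \<Longrightarrow> \<bar>\<phi> \<alpha> x - \<phi> \<alpha> y\<bar> \<le> \<bar>x - y\<bar>"
    and zero: "\<And>\<alpha>. \<alpha> > 0 \<Longrightarrow> \<phi> \<alpha> 0 = 0"
  shows "(\<forall>x. ((\<lambda>\<alpha>. \<phi> \<alpha> x) \<longlongrightarrow> x) (at_right 0)) \<longleftrightarrow>
         (\<forall>x. ((\<lambda>\<alpha>. preimage_dev (\<phi> \<alpha>) x) \<longlongrightarrow> 0) (at_right 0))"
proof
  have pos: "eventually (\<lambda>\<alpha>::real. \<alpha> > 0) (at_right 0)"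
    by (simp add: eventually_at_right_less)
  have cont: "continuous_on UNIV (\<phi> \<alpha>)" if "\<alpha> > 0" for \<alpha>
  proof (rule lipschitz_on_continuous_on)
    show "1-lipschitz_on UNIV (\<phi> \<alpha>)"
      using nonexp[OF that] by (simp add: lipschitz_on_def dist_real_def)
  qed
  assume H: "\<forall>x. ((\<lambda>\<alpha>. \<phi> \<alpha> x) \<longlongrightarrow> x) (at_right 0)"
  show "\<forall>x. ((\<lambda>\<alpha>. preimage_dev (\<phi> \<alpha>) x) \<longlongrightarrow> 0) (at_right 0)"
  proof
    fix x
    show "((\<lambda>\<alpha>. preimage_dev (\<phi> \<alpha>) x) \<longlongrightarrow> 0) (at_right 0)"
      unfolding order_tendsto_iff
    proof safe
      fix l :: ereal assume "l < 0"
      thus "eventually (\<lambda>\<alpha>. l < preimage_dev (\<phi> \<alpha>) x) (at_right 0)"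
        using pd_nonneg[of "\<phi> _" x] by (intro always_eventually allI) (meson order.strict_trans2)
    next
      fix u :: ereal assume "u > 0"
      then obtain e where e0: "0 < ereal e" and eu: "ereal e < u"
        using ereal_dense2 by blast
      have e: "e > 0" using e0 by simp
      have "eventually (\<lambda>\<alpha>. \<phi> \<alpha> (x - e) < x) (at_right 0)"
        using H[rule_format, of "x-e"] e unfolding order_tendsto_iff by auto
      moreover have "eventually (\<lambda>\<alpha>. x < \<phi> \<alpha> (x + e)) (at_right 0)"
        using H[rule_format, of "x+e"] e unfolding order_tendsto_iff by auto
      ultimately show "eventually (\<lambda>\<alpha>. preimage_dev (\<phi> \<alpha>) x < u) (at_right 0)"
        using pos
      proof eventually_elim
        case (elim \<alpha>)
        have "preimage_dev (\<phi> \<alpha>) x \<le> ereal e"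
          using pd_bound[OF mono cont e] elim by auto
        thus ?case using eu by auto
      qed
    qed
  qed
next
  have pos: "eventually (\<lambda>\<alpha>::real. \<alpha> > 0) (at_right 0)"
    by (simp add: eventually_at_right_less)
  assume H: "\<forall>x. ((\<lambda>\<alpha>. preimage_dev (\<phi> \<alpha>) x) \<longlongrightarrow> 0) (at_right 0)"
  show "\<forall>x. ((\<lambda>\<alpha>. \<phi> \<alpha> x) \<longlongrightarrow> x) (at_right 0)"
  proof
    fix x
    have key: "eventually (\<lambda>\<alpha>. \<bar>\<phi> \<alpha> x - x\<bar> < e) (at_right 0)" if e: "e > 0" for e
    proof -
      have "eventually (\<lambda>\<alpha>. preimage_dev (\<phi> \<alpha>) x < ereal e) (at_right 0)"
        using H[rule_format, of x] e unfolding order_tendsto_iff by auto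
      with pos show ?thesis
      proof eventually_elim
        case (elim \<alpha>)
        then obtain y where y: "\<phi> \<alpha> y = x" "\<bar>y - x\<bar> < e" using pd_small by blast
        have "\<bar>\<phi> \<alpha> x - \<phi> \<alpha> y\<bar> \<le> \<bar>x - y\<bar>" using nonexp elim by blast
        thus ?case using y by auto
      qed
    qed
    show "((\<lambda>\<alpha>. \<phi> \<alpha> x) \<longlongrightarrow> x) (at_right 0)"
      unfolding tendsto_iff dist_real_def using key by simp
  qed
qed

end
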